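(* Let $c\in\mathbb{N}$ and let $\pi$ be a $c$-witness. Then there exists a $c$-witness $\pi'$ such that either $\mathrm{cost}_1(\pi')=+\infty$ or $\mathrm{cost}_1(\pi')\le 2|V|W$.
   Context: Reachability game with one-player environment: a finite set $V$ of vertices, edges $E\subseteq V\times V$ (each vertex has a successor), initial vertex $v_0$, two players $0$ and $1$ owning a partition $V_0\uplus V_1$ of $V$, weight functions $w_0,w_1:E\to\mathbb{N}$, $W=\max\{w_i(e)\mid e\in E, i\in\{0,1\}\}$, and target sets $T_0,T_1\subseteq V$. For a play (infinite path) $\pi$, $\mathrm{cost}_i(\pi)$ is the sum of $w_i$ over the edges of the shortest prefix of $\pi$ ending in $T_i$, and $+\infty$ if none. A strategy of player $i$ maps each finite path ending in $V_i$ to a successor of its last vertex. A deviation of a play $\pi$ is a finite path $hv$ ($v\in V$) such that $h$ is a nonempty prefix of $\pi$ but $hv$ is not. A $c$-witness is a play $\pi$ from $v_0$ such that $\mathrm{cost}_0(\pi)\le c$ and, with $d=\mathrm{cost}_1(\pi)$, for every deviation $hv$ of $\pi$, player $0$ has a strategy from $v$ in the two-player zero-sum game (player $0$ against player $1$) such that every play $\pi'$ starting at $v$ consistent with it satisfies $\mathrm{cost}_0(h\pi')\le c$ or $\mathrm{cost}_1(h\pi')>d$. *)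

theory Defs
  imports Main "HOL-Library.Extended_Nat"
begin

text \<open>Arena: vertex set V, edges E, player-0 vertices V0 (player 1 owns V - V0),
  weights w0 w1 on edges, targets T0 T1, initial vertex v0.\<close>

definition well_formed_game ::
  "'v set \<Rightarrow> ('v \<times> 'v) set \<Rightarrow> 'v set \<Rightarrow> 'v set \<Rightarrow> 'v set \<Rightarrow> 'v \<Rightarrow> bool" where
  "well_formed_game V E V0 T0 T1 v0 \<longleftrightarrow>
     finite V \<and> E \<subseteq> V \<times> V \<and> (\<forall>u\<in>V. \<exists>v. (u, v) \<in> E) \<and>
     v0 \<in> V \<and> V0 \<subseteq> V \<and> T0 \<subseteq> V \<and> T1 \<subseteq> V"

definition max_weight :: "('v \<times> 'v) set \<Rightarrow> ('v \<times> 'v \<Rightarrow> nat) \<Rightarrow> ('v \<times> 'v \<Rightarrow> nat) \<Rightarrow> nat" where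
  "max_weight E w0 w1 = Max (w0 ` E \<union> w1 ` E)"

definition is_play :: "('v \<times> 'v) set \<Rightarrow> 'v \<Rightarrow> (nat \<Rightarrow> 'v) \<Rightarrow> bool" where
  "is_play E v \<pi> \<longleftrightarrow> \<pi> 0 = v \<and> (\<forall>i. (\<pi> i, \<pi> (Suc i)) \<in> E)"

definition cost :: "('v \<times> 'v \<Rightarrow> nat) \<Rightarrow> 'v set \<Rightarrow> (nat \<Rightarrow> 'v) \<Rightarrow> enat" where
  "cost w T \<pi> = (if \<exists>n. \<pi> n \<in> T
      then enat (\<Sum>k < (LEAST n. \<pi> n \<in> T). w (\<pi> k, \<pi> (Suc k)))
      else \<infinity>)"

definition concat_play :: "'v list \<Rightarrow> (nat \<Rightarrow> 'v) \<Rightarrow> (nat \<Rightarrow> 'v)" where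
  "concat_play h \<pi>' = (\<lambda>i. if i < length h then h ! i else \<pi>' (i - length h))"

text \<open>Deviation hv of \<pi> with h = \<pi>_0 ... \<pi>_(k-1) (k \<ge> 1) the prefix of length k:
  hv is a finite path, but not a prefix of \<pi>.\<close>
definition deviation :: "('v \<times> 'v) set \<Rightarrow> (nat \<Rightarrow> 'v) \<Rightarrow> nat \<Rightarrow> 'v \<Rightarrow> bool" where
  "deviation E \<pi> k v \<longleftrightarrow> 1 \<le> k \<and> (\<pi> (k - 1), v) \<in> E \<and> v \<noteq> \<pi> k"

definition strategy0 :: "'v set \<Rightarrow> ('v \<times> 'v) set \<Rightarrow> ('v list \<Rightarrow> 'v) \<Rightarrow> bool" where
  "strategy0 V0 E \<sigma> \<longleftrightarrow> (\<forall>p. p \<noteq> [] \<and> last p \<in> V0 \<longrightarrow> (last p, \<sigma> p) \<in> E)"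

definition consistent0 :: "'v set \<Rightarrow> ('v list \<Rightarrow> 'v) \<Rightarrow> (nat \<Rightarrow> 'v) \<Rightarrow> bool" where
  "consistent0 V0 \<sigma> \<pi> \<longleftrightarrow> (\<forall>n. \<pi> n \<in> V0 \<longrightarrow> \<pi> (Suc n) = \<sigma> (map \<pi> [0..<Suc n]))"

definition c_witness ::
  "('v \<times> 'v) set \<Rightarrow> 'v set \<Rightarrow> ('v \<times> 'v \<Rightarrow> nat) \<Rightarrow> ('v \<times> 'v \<Rightarrow> nat) \<Rightarrow> 'v set \<Rightarrow> 'v set
   \<Rightarrow> 'v \<Rightarrow> nat \<Rightarrow> (nat \<Rightarrow> 'v) \<Rightarrow> bool" where
  "c_witness E V0 w0 w1 T0 T1 v0 c \<pi> \<longleftrightarrow>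
     is_play E v0 \<pi> \<and> cost w0 T0 \<pi> \<le> enat c \<and>
     (\<forall>k v. deviation E \<pi> k v \<longrightarrow>
        (\<exists>\<sigma>. strategy0 V0 E \<sigma> \<and>
           (\<forall>\<pi>'. is_play E v \<pi>' \<and> consistent0 V0 \<sigma> \<pi>' \<longrightarrow>
              cost w0 T0 (concat_play (map \<pi> [0..<k]) \<pi>') \<le> enat c \<or>
              cost w1 T1 (concat_play (map \<pi> [0..<k]) \<pi>') > cost w1 T1 \<pi>)))"

end

theory Submission
  imports Defs
begin

definition cutp :: "(nat \<Rightarrow> 'v) \<Rightarrow> nat \<Rightarrow> nat \<Rightarrow> nat \<Rightarrow> 'v" where
  "cutp \<rho> i j = (\<lambda>t. if t < i then \<rho> t else \<rho> (t + (j - i)))"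

lemma cut_edge:
  assumes "i < j" "\<rho> i = \<rho> j"
  shows "(cutp \<rho> i j k, cutp \<rho> i j (Suc k)) =
     (\<rho> (if k < i then k else k + (j - i)), \<rho> (Suc (if k < i then k else k + (j - i))))"
proof (cases "Suc k < i")
  case True then show ?thesis by (auto simp: cutp_def)
next
  case False
  show ?thesis
  proof (cases "k < i")
    case True
    then have "Suc k = i" using False by simp
    then have "Suc (k + j - i) = j" "Suc (k + (j - i)) = j" using assms by auto
    then show ?thesis using assms False True \<open>Suc k = i\<close> by (auto simp: cutp_def)
  next
    case False then show ?thesis using assms by (auto simp: cutp_def)
  qed
qed

lemma cost_agree:
  assumes "\<forall>t\<le>i. \<rho>' t = \<rho> t" "t0 \<le> i" "\<rho> t0 \<in> T"
  shows "cost w T \<rho>' = cost w T \<rho>"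
proof -
  let ?L = "LEAST n. \<rho> n \<in> T"
  have L: "\<rho> ?L \<in> T" "?L \<le> t0" using assms(3) by (auto intro: LeastI Least_le)
  have L': "(LEAST n. \<rho>' n \<in> T) = ?L"
  proof (rule Least_equality)
    show "\<rho>' ?L \<in> T" using L assms by auto
    fix y assume "\<rho>' y \<in> T"
    show "?L \<le> y"
    proof (cases "y \<le> i")
      case True then show ?thesis using \<open>\<rho>' y \<in> T\<close> assms(1) by (auto intro: Least_le)
    next
      case False then show ?thesis using L assms(2) by auto
    qed
  qed
  have "\<rho>' t0 \<in> T" using assms by auto
  then have ex: "\<exists>n. \<rho>' n \<in> T" by blast
  have "(\<Sum>k < ?L. w (\<rho>' k, \<rho>' (Suc k))) = (\<Sum>k < ?L. w (\<rho> k, \<rho> (Suc k)))"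
    using L assms by (intro sum.cong) auto
  then show ?thesis using ex assms(3) L' unfolding cost_def by auto
qed

lemma cost_cut_no_hit:
  assumes ij: "i < j" "\<rho> i = \<rho> j" and nh: "\<forall>t<j. \<rho> t \<notin> T"
  shows "cost w T \<rho> = enat (\<Sum>k\<in>{i..<j}. w (\<rho> k, \<rho> (Suc k))) + cost w T (cutp \<rho> i j)"
proof (cases "\<exists>n. \<rho> n \<in> T")
  case True
  let ?L = "LEAST n. \<rho> n \<in> T"
  let ?d = "j - i"
  have L: "\<rho> ?L \<in> T" using True by (auto intro: LeastI_ex)
  have Lj: "j \<le> ?L" using L nh by (meson not_le)
  have c: "cutp \<rho> i j (?L - ?d) \<in> T" using L Lj ij by (auto simp: cutp_def)
  have L': "(LEAST n. cutp \<rho> i j n \<in> T) = ?L - ?d"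
  proof (rule Least_equality)
    show "cutp \<rho> i j (?L - ?d) \<in> T" by (rule c)
    fix y assume y: "cutp \<rho> i j y \<in> T"
    show "?L - ?d \<le> y"
    proof (cases "y < i")
      case True then show ?thesis using y nh ij by (auto simp: cutp_def)
    next
      case False then have "\<rho> (y + ?d) \<in> T" using y by (auto simp: cutp_def)
      then have "?L \<le> y + ?d" by (rule Least_le)
      then show ?thesis by arith
    qed
  qed
  have ex: "\<exists>n. cutp \<rho> i j n \<in> T" using c by blast
  define f where "f = (\<lambda>k. w (\<rho> k, \<rho> (Suc k)))"
  have e: "w (cutp \<rho> i j k, cutp \<rho> i j (Suc k)) = f (if k < i then k else k + ?d)" for k
    unfolding f_def using cut_edge[OF ij, of k] by metis
  have s1: "(\<Sum>k < ?L - ?d. w (cutp \<rho> i j k, cutp \<rho> i j (Suc k)))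
      = (\<Sum>k < i. f k) + (\<Sum>k\<in>{i..<?L - ?d}. f (k + ?d))"
  proof -
    have "(\<Sum>k < ?L - ?d. w (cutp \<rho> i j k, cutp \<rho> i j (Suc k)))
        = (\<Sum>k < i. w (cutp \<rho> i j k, cutp \<rho> i j (Suc k))) + (\<Sum>k\<in>{i..<?L - ?d}. w (cutp \<rho> i j k, cutp \<rho> i j (Suc k)))"
      using Lj ij by (metis (no_types, lifting) atLeast0LessThan diff_diff_cancel diff_le_mono less_imp_le_nat sum.atLeastLessThan_concat zero_le)
    also have "\<dots> = (\<Sum>k < i. f k) + (\<Sum>k\<in>{i..<?L - ?d}. f (k + ?d))"
      by (simp add: e)
    finally show ?thesis .
  qed
  have s2: "(\<Sum>k\<in>{i..<?L - ?d}. f (k + ?d)) = (\<Sum>k\<in>{j..<?L}. f k)"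
    using sum.shift_bounds_nat_ivl[of f i ?d "?L - ?d"] Lj ij by simp
  have s3: "(\<Sum>k < ?L. f k) = (\<Sum>k < i. f k) + (\<Sum>k\<in>{i..<j}. f k) + (\<Sum>k\<in>{j..<?L}. f k)"
    using Lj ij by (metis atLeast0LessThan le0 less_imp_le_nat sum.atLeastLessThan_concat)
  show ?thesis using True ex L' s1 s2 s3 unfolding cost_def f_def by simp
next
  case False
  then have "\<not> (\<exists>n. cutp \<rho> i j n \<in> T)" by (auto simp: cutp_def)
  then show ?thesis using False unfolding cost_def by simp
qed

lemma cut_witness:
  assumes wit: "c_witness E V0 w0 w1 T0 T1 v0 c \<pi>" and ij: "i < j" "\<pi> i = \<pi> j"
    and n1: "\<forall>t<j. \<pi> t \<notin> T1"
    and n0: "(\<forall>t<j. \<pi> t \<notin> T0) \<or> (\<exists>t\<le>i. \<pi> t \<in> T0)"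
  shows "c_witness E V0 w0 w1 T0 T1 v0 c (cutp \<pi> i j)"
proof -
  define C1 where "C1 = (\<Sum>k\<in>{i..<j}. w1 (\<pi> k, \<pi> (Suc k)))"
  have H1: "cost w1 T1 \<rho> = enat C1 + cost w1 T1 (cutp \<rho> i j)" if ag: "\<forall>t\<le>j. \<rho> t = \<pi> t" for \<rho>
  proof -
    have "C1 = (\<Sum>k\<in>{i..<j}. w1 (\<rho> k, \<rho> (Suc k)))"
      unfolding C1_def using ag by (intro sum.cong) auto
    moreover have "\<rho> i = \<rho> j" "\<forall>t<j. \<rho> t \<notin> T1" using ag ij n1 by auto
    ultimately show ?thesis using cost_cut_no_hit[OF ij(1)] by metis
  qed
  have H0: "cost w0 T0 (cutp \<rho> i j) \<le> cost w0 T0 \<rho>" if ag: "\<forall>t\<le>j. \<rho> t = \<pi> t" for \<rho>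
  proof -
    have r: "\<rho> i = \<rho> j" using ag ij by auto
    show ?thesis
    proof (cases "\<forall>t<j. \<pi> t \<notin> T0")
      case True
      then have "\<forall>t<j. \<rho> t \<notin> T0" using ag by auto
      then show ?thesis using cost_cut_no_hit[OF ij(1) r, of T0 w0] by simp
    next
      case False
      then obtain t where t: "t \<le> i" "\<pi> t \<in> T0" using n0 by auto
      then have "\<rho> t \<in> T0" using ag ij by auto
      moreover have "\<forall>s\<le>i. cutp \<rho> i j s = \<rho> s"
      proof (intro allI impI)
        fix s assume "s \<le> i"
        show "cutp \<rho> i j s = \<rho> s"
        proof (cases "s < i")
          case True then show ?thesis by (simp add: cutp_def)
        next
          case False
          then have "s = i" using \<open>s \<le> i\<close> by simp
          moreover have "i + (j - i) = j" using ij by simp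
          ultimately show ?thesis using r by (simp add: cutp_def)
        qed
      qed
      ultimately show ?thesis using cost_agree[of i "cutp \<rho> i j" \<rho> t T0 w0] t by simp
    qed
  qed
  have play: "is_play E v0 \<pi>" and c0: "cost w0 T0 \<pi> \<le> enat c"
    and dev: "\<And>k v. deviation E \<pi> k v \<Longrightarrow> (\<exists>\<sigma>. strategy0 V0 E \<sigma> \<and>
           (\<forall>\<pi>'. is_play E v \<pi>' \<and> consistent0 V0 \<sigma> \<pi>' \<longrightarrow>
              cost w0 T0 (concat_play (map \<pi> [0..<k]) \<pi>') \<le> enat c \<or>
              cost w1 T1 (concat_play (map \<pi> [0..<k]) \<pi>') > cost w1 T1 \<pi>))"
    using wit unfolding c_witness_def by auto
  let ?p = "cutp \<pi> i j"
  have Hpi: "cost w1 T1 \<pi> = enat C1 + cost w1 T1 ?p" using H1[of \<pi>] by simp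
  have "is_play E v0 ?p"
    unfolding is_play_def
  proof (intro conjI allI)
    show "?p 0 = v0" using play ij unfolding is_play_def cutp_def by auto
    fix k show "(?p k, ?p (Suc k)) \<in> E" using cut_edge[OF ij, of k] play unfolding is_play_def by metis
  qed
  moreover have "cost w0 T0 ?p \<le> enat c" using H0[of \<pi>] c0 by simp
  moreover have "\<exists>\<sigma>. strategy0 V0 E \<sigma> \<and>
           (\<forall>\<pi>'. is_play E v \<pi>' \<and> consistent0 V0 \<sigma> \<pi>' \<longrightarrow>
              cost w0 T0 (concat_play (map ?p [0..<k]) \<pi>') \<le> enat c \<or>
              cost w1 T1 (concat_play (map ?p [0..<k]) \<pi>') > cost w1 T1 ?p)"
    if d: "deviation E ?p k v" for k v
  proof (cases "k \<le> i")
    case True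
    have "deviation E \<pi> k v" using d True ij unfolding deviation_def cutp_def
      by (auto split: if_splits)
    then obtain \<sigma> where s: "strategy0 V0 E \<sigma>" and
      sp: "\<forall>\<pi>'. is_play E v \<pi>' \<and> consistent0 V0 \<sigma> \<pi>' \<longrightarrow>
              cost w0 T0 (concat_play (map \<pi> [0..<k]) \<pi>') \<le> enat c \<or>
              cost w1 T1 (concat_play (map \<pi> [0..<k]) \<pi>') > cost w1 T1 \<pi>"
      using dev by blast
    have hm: "map ?p [0..<k] = map \<pi> [0..<k]" using True by (auto simp: cutp_def)
    have le: "cost w1 T1 ?p \<le> cost w1 T1 \<pi>" using Hpi by (simp add: add_increasing)
    show ?thesis
    proof (intro exI conjI allI impI)
      show "strategy0 V0 E \<sigma>" by (rule s)
      fix \<pi>' assume pp: "is_play E v \<pi>' \<and> consistent0 V0 \<sigma> \<pi>'"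
      then have "cost w0 T0 (concat_play (map \<pi> [0..<k]) \<pi>') \<le> enat c \<or>
              cost w1 T1 (concat_play (map \<pi> [0..<k]) \<pi>') > cost w1 T1 \<pi>" using sp by blast
      then show "cost w0 T0 (concat_play (map ?p [0..<k]) \<pi>') \<le> enat c \<or>
              cost w1 T1 (concat_play (map ?p [0..<k]) \<pi>') > cost w1 T1 ?p"
        unfolding hm using le order.strict_trans1 by blast
    qed
  next
    case False
    let ?K = "k + (j - i)"
    have "deviation E \<pi> ?K v" using d False ij unfolding deviation_def cutp_def
      by (auto split: if_splits)
    then obtain \<sigma> where s: "strategy0 V0 E \<sigma>" and
      sp: "\<forall>\<pi>'. is_play E v \<pi>' \<and> consistent0 V0 \<sigma> \<pi>' \<longrightarrow>
              cost w0 T0 (concat_play (map \<pi> [0..<?K]) \<pi>') \<le> enat c \<or>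
              cost w1 T1 (concat_play (map \<pi> [0..<?K]) \<pi>') > cost w1 T1 \<pi>"
      using dev by blast
    have "cost w0 T0 (concat_play (map ?p [0..<k]) \<pi>') \<le> enat c \<or>
              cost w1 T1 (concat_play (map ?p [0..<k]) \<pi>') > cost w1 T1 ?p"
      if pp: "is_play E v \<pi>' \<and> consistent0 V0 \<sigma> \<pi>'" for \<pi>'
    proof -
      define \<rho> where "\<rho> = concat_play (map \<pi> [0..<?K]) \<pi>'"
      have ag: "\<forall>t\<le>j. \<rho> t = \<pi> t" using False ij unfolding \<rho>_def concat_play_def by auto
      have eq: "concat_play (map ?p [0..<k]) \<pi>' = cutp \<rho> i j"
        using False ij unfolding \<rho>_def concat_play_def cutp_def by (auto simp: fun_eq_iff)
      have "cost w0 T0 \<rho> \<le> enat c \<or> cost w1 T1 \<rho> > cost w1 T1 \<pi>"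
        using sp pp unfolding \<rho>_def by blast
      moreover have "cost w0 T0 (cutp \<rho> i j) \<le> cost w0 T0 \<rho>" using H0 ag by blast
      moreover have "cost w1 T1 \<rho> = enat C1 + cost w1 T1 (cutp \<rho> i j)" using H1 ag by blast
      ultimately show ?thesis using Hpi eq
        by (metis order_trans enat_add_left_cancel_less enat.distinct(1))
    qed
    then show ?thesis using s by blast
  qed
  ultimately show ?thesis unfolding c_witness_def by blast
qed


lemma pigeon:
  assumes "finite V" "\<forall>t. \<pi> t \<in> V"
  shows "\<exists>i j. a \<le> i \<and> i < j \<and> j \<le> a + card V \<and> \<pi> i = \<pi> j"
proof -
  have "\<not> inj_on \<pi> {a..a + card V}"
  proof
    assume "inj_on \<pi> {a..a + card V}"
    moreover have "\<pi> ` {a..a + card V} \<subseteq> V" using assms by auto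
    ultimately have "card {a..a + card V} \<le> card V" using card_inj_on_le assms(1) by blast
    then show False by simp
  qed
  then obtain x y where xy: "x \<in> {a..a + card V}" "y \<in> {a..a + card V}" "x \<noteq> y" "\<pi> x = \<pi> y"
    unfolding inj_on_def by blast
  show ?thesis
  proof (cases "x < y")
    case True then show ?thesis using xy by auto
  next
    case False then have "y < x" using xy by auto
    then show ?thesis using xy by (metis atLeastAtMost_iff)
  qed
qed

theorem lemma28:
  fixes V :: "'v set" and E :: "('v \<times> 'v) set" and V0 T0 T1 :: "'v set" and v0 :: 'v
    and w0 w1 :: "'v \<times> 'v \<Rightarrow> nat" and c :: nat and \<pi> :: "nat \<Rightarrow> 'v"
  assumes "well_formed_game V E V0 T0 T1 v0"
    and "c_witness E V0 w0 w1 T0 T1 v0 c \<pi>"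
  shows "\<exists>\<pi>'. c_witness E V0 w0 w1 T0 T1 v0 c \<pi>' \<and>
           (cost w1 T1 \<pi>' = \<infinity> \<or> cost w1 T1 \<pi>' \<le> enat (2 * card V * max_weight E w0 w1))"
proof -
  have finV: "finite V" and EV: "E \<subseteq> V \<times> V" and v0V: "v0 \<in> V"
    using assms(1) unfolding well_formed_game_def by auto
  have finE: "finite E" using finV EV finite_subset by blast
  let ?W = "max_weight E w0 w1"
  let ?N = "card V"
  have inV: "\<rho> t \<in> V" if "is_play E v0 \<rho>" for \<rho> t
  proof (cases t)
    case 0 then show ?thesis using that v0V unfolding is_play_def by auto
  next
    case (Suc s) then show ?thesis using that EV unfolding is_play_def by blast
  qed
  have wle: "w1 e \<le> ?W" if "e \<in> E" for e
    unfolding max_weight_def using that finE by (intro Max_ge) auto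
  let ?G = "\<lambda>\<pi>'. c_witness E V0 w0 w1 T0 T1 v0 c \<pi>' \<and>
           (cost w1 T1 \<pi>' = \<infinity> \<or> cost w1 T1 \<pi>' \<le> enat (2 * ?N * ?W))"
  have main: "\<forall>\<rho>. c_witness E V0 w0 w1 T0 T1 v0 c \<rho> \<longrightarrow> \<rho> M \<in> T1 \<longrightarrow> (\<exists>\<pi>'. ?G \<pi>')" for M
  proof (induction M rule: less_induct)
    case (less M)
    show ?case
    proof (intro allI impI)
      fix \<rho> assume w: "c_witness E V0 w0 w1 T0 T1 v0 c \<rho>" and hM: "\<rho> M \<in> T1"
      have pl: "is_play E v0 \<rho>" using w unfolding c_witness_def by auto
      have rV: "\<forall>t. \<rho> t \<in> V" using inV[OF pl] by blast
      define n where "n = (LEAST t. \<rho> t \<in> T1)"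
      have n: "\<rho> n \<in> T1" "n \<le> M" using hM unfolding n_def by (auto intro: LeastI Least_le)
      have nmin: "\<forall>t<n. \<rho> t \<notin> T1" unfolding n_def using not_less_Least by blast
      show "\<exists>\<pi>'. ?G \<pi>'"
      proof (cases "n \<le> 2 * ?N")
        case True
        have c1: "cost w1 T1 \<rho> = enat (\<Sum>k<n. w1 (\<rho> k, \<rho> (Suc k)))"
          using hM unfolding cost_def n_def by auto
        have "(\<Sum>k<n. w1 (\<rho> k, \<rho> (Suc k))) \<le> of_nat (card {..<n}) * ?W"
          by (rule sum_bounded_above) (use wle pl in \<open>auto simp: is_play_def\<close>)
        also have "\<dots> \<le> 2 * ?N * ?W" using True by simp
        finally show ?thesis using c1 w by auto
      next
        case False
        obtain i j where ij: "i < j" "\<rho> i = \<rho> j" "j < n"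
          and cond: "(\<forall>t<j. \<rho> t \<notin> T0) \<or> (\<exists>t\<le>i. \<rho> t \<in> T0)"
        proof (cases "\<forall>t\<le>?N. \<rho> t \<notin> T0")
          case True
          obtain i j where "0 \<le> i" "i < j" "j \<le> 0 + ?N" "\<rho> i = \<rho> j"
            using pigeon[OF finV rV, of 0] by blast
          then show ?thesis using that[of i j] True False by auto
        next
          case F: False
          obtain i j where "?N \<le> i" "i < j" "j \<le> ?N + ?N" "\<rho> i = \<rho> j"
            using pigeon[OF finV rV, of ?N] by blast
          moreover have "\<exists>t\<le>i. \<rho> t \<in> T0" using F \<open>?N \<le> i\<close> by (meson le_trans not_le_imp_less order.strict_implies_order)
          ultimately show ?thesis using that[of i j] False by auto
        qed
        have w': "c_witness E V0 w0 w1 T0 T1 v0 c (cutp \<rho> i j)"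
          using cut_witness[OF w ij(1,2) _ cond] nmin ij(3) by auto
        have "cutp \<rho> i j (n - (j - i)) = \<rho> n" using ij unfolding cutp_def by auto
        then have "cutp \<rho> i j (n - (j - i)) \<in> T1" using n by simp
        moreover have "n - (j - i) < M" using ij n by arith
        ultimately show ?thesis using less.IH w' by blast
      qed
    qed
  qed
  show ?thesis
  proof (cases "\<exists>M. \<pi> M \<in> T1")
    case True
    then obtain M where "\<pi> M \<in> T1" by blast
    then show ?thesis using main assms(2) by blast
  next
    case False
    then have "cost w1 T1 \<pi> = \<infinity>" unfolding cost_def by auto
    then show ?thesis using assms(2) by blast
  qed
qed

end
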